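(* Let $e_1,\dots,e_d$ be the standard basis of $\mathbb{R}^d$ and put $w_i=\lambda_i(e_1+\dots+e_i)$ for $i\in[1,d]$, where $\lambda_1\ge\lambda_2\ge\dots\ge\lambda_d>0$. Then the affine hyperplane $\mathcal H$ through $w_1,\dots,w_d$ intersects the set $Q=\lambda_d(e_1+\dots+e_d)-\mathbb{R}_+^d$ only in its boundary $\partial Q$. In particular, the Euclidean distance from $O$ to $\mathcal H$ is at least $\lambda_d$. *)

theory Defs
  imports "HOL-Analysis.Analysis"
begin

definition prefix_ones :: "'n::{finite,linorder} \<Rightarrow> real ^ 'n::{finite,linorder}" where
  "prefix_ones i = (\<chi> j. if j \<le> i then 1 else 0)"

definition wpt :: "('n::{finite,linorder} \<Rightarrow> real) \<Rightarrow> 'n::{finite,linorder} \<Rightarrow> real ^ 'n::{finite,linorder}" where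
  "wpt lam i = lam i *\<^sub>R prefix_ones i"

definition Qset :: "real \<Rightarrow> (real ^ 'n::{finite,linorder}) set" where
  "Qset c = {c *\<^sub>R (\<chi> j. 1) - y | y. \<forall>j. y $ j \<ge> 0}"

end

theory Submission
  imports Defs
begin

lemma telescope:
  fixes g :: "'n::{finite,linorder} \<Rightarrow> real"
  assumes mono: "\<And>i j. i \<le> j \<Longrightarrow> g i \<le> g j" and pos: "\<And>i. g i > 0"
  defines "a \<equiv> \<lambda>j. g j - Max (insert 0 (g ` {k. k < j}))"
  shows "finite S \<Longrightarrow> (\<forall>j\<in>S. \<forall>k<j. k \<in> S) \<Longrightarrow> S \<noteq> {} \<Longrightarrow> sum a S = g (Max S)"
proof (induct S rule: finite_linorder_max_induct)
  case empty
  then show ?case by simp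
next
  case (insert b A)
  have A: "A = {k. k < b}" using insert by auto
  show ?case
  proof (cases "A = {}")
    case True
    then have "{k. k < b} = {}" using A by simp
    then show ?thesis using True by (simp add: a_def)
  next
    case False
    have dc: "\<forall>j\<in>A. \<forall>k<j. k \<in> A" using A by auto
    have IH: "sum a A = g (Max A)" using insert dc False by simp
    have M: "Max (insert 0 (g ` A)) = g (Max A)"
    proof (rule Max_eqI)
      show "finite (insert 0 (g ` A))" using insert by simp
      show "g (Max A) \<in> insert 0 (g ` A)" using False insert by simp
      fix y assume "y \<in> insert 0 (g ` A)"
      then show "y \<le> g (Max A)"
        using pos[of "Max A"] mono Max_ge[OF insert(1)] by auto
    qed
    have "sum a (insert b A) = a b + sum a A"
    proof -
      have "b \<notin> A" using insert(2) by blast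
      then show ?thesis using insert(1) by simp
    qed
    also have "\<dots> = g b" using IH M A by (simp add: a_def)
    also have "Max (insert b A) = b" using insert by (simp add: Max_insert2 less_imp_le)
    ultimately show ?thesis by simp
  qed
qed

theorem lemma2p4:
  fixes lam :: "'n::{finite,linorder} \<Rightarrow> real"
  assumes "\<And>i j. i \<le> j \<Longrightarrow> lam j \<le> lam i"
    and "\<And>i. lam i > 0"
  shows "affine hull (range (wpt lam)) \<inter> Qset (lam (Max UNIV)) \<subseteq> frontier (Qset (lam (Max UNIV)))
         \<and> infdist 0 (affine hull (range (wpt lam))) \<ge> lam (Max UNIV)"
proof -
  define g where "g = (\<lambda>i. 1 / lam i)"
  have gmono: "\<And>i j. i \<le> j \<Longrightarrow> g i \<le> g j"
    using assms unfolding g_def by (simp add: frac_le)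
  have gpos: "\<And>i. g i > 0" using assms(2) unfolding g_def by simp
  define a where "a = (\<lambda>j. g j - Max (insert 0 (g ` {k. k < j})))"
  have tele: "\<And>S. finite S \<Longrightarrow> (\<forall>j\<in>S. \<forall>k<j. k \<in> S) \<Longrightarrow> S \<noteq> {} \<Longrightarrow> sum a S = g (Max S)"
    using telescope[of g, OF gmono gpos] unfolding a_def by blast
  have anonneg: "\<And>j. a j \<ge> 0"
  proof -
    fix j
    have "Max (insert 0 (g ` {k. k < j})) \<le> g j"
      using gpos[of j] gmono by (auto intro!: Max.boundedI less_imp_le)
    then show "a j \<ge> 0" unfolding a_def by simp
  qed
  define c where "c = lam (Max UNIV)"
  have cpos: "c > 0" using assms(2) c_def by simp
  define av :: "real ^ 'n::{finite,linorder}" where "av = (\<chi> j. a j)"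
  have suma: "sum a UNIV = 1 / c"
    using tele[of UNIV] unfolding c_def g_def by simp
  have wH: "av \<bullet> wpt lam i = 1" for i
  proof -
    have "av \<bullet> wpt lam i = (\<Sum>j\<in>UNIV. a j * (if j \<le> i then lam i else 0))"
      by (simp add: inner_vec_def av_def wpt_def prefix_ones_def if_distrib cong: if_cong)
    also have "\<dots> = (\<Sum>j\<in>UNIV. if j \<le> i then a j * lam i else 0)"
      by (rule sum.cong) auto
    also have "\<dots> = (\<Sum>j\<in>{j. j \<le> i}. a j * lam i)"
      using sum.inter_filter[of "UNIV::'n set" "\<lambda>j. a j * lam i" "\<lambda>j. j \<le> i"] by simp
    also have "\<dots> = lam i * sum a {j. j \<le> i}" by (simp add: sum_distrib_left mult.commute)
    also have "sum a {j. j \<le> i} = g i"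
    proof -
      have "sum a {j. j \<le> i} = g (Max {j. j \<le> i})"
        by (rule tele) auto
      moreover have "Max {j. j \<le> i} = i" by (rule Max_eqI) auto
      ultimately show ?thesis by simp
    qed
    finally show ?thesis using assms(2)[of i] by (simp add: g_def)
  qed
  have Hsub: "affine hull (range (wpt lam)) \<subseteq> {x. av \<bullet> x = 1}"
    by (rule hull_minimal) (auto simp: wH affine_hyperplane)
  have Qle: "av \<bullet> y \<le> 1" if yQ: "y \<in> Qset c" for y
  proof -
    obtain z where y: "y = c *\<^sub>R (\<chi> j. 1) - z" and z: "\<forall>j. z $ j \<ge> 0"
      using yQ unfolding Qset_def by blast
    have "av \<bullet> y = c * sum a UNIV - av \<bullet> z"
      by (simp add: y inner_diff_right inner_vec_def av_def sum_distrib_left right_diff_distrib sum_subtractf mult.commute)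
    moreover have "av \<bullet> z \<ge> 0"
      unfolding inner_vec_def av_def using z anonneg by (auto intro!: sum_nonneg)
    ultimately show ?thesis using suma cpos by simp
  qed
  have part1: "affine hull (range (wpt lam)) \<inter> Qset c \<subseteq> frontier (Qset c)"
  proof
    fix x assume x: "x \<in> affine hull (range (wpt lam)) \<inter> Qset c"
    then have ax: "av \<bullet> x = 1" using Hsub by auto
    have "x \<notin> interior (Qset c)"
    proof
      assume "x \<in> interior (Qset c)"
      then obtain e where e: "e > 0" "ball x e \<subseteq> Qset c"
        using mem_interior by blast
      define t where "t = e / (2 * norm ((\<chi> j. 1) :: real ^ 'n::{finite,linorder}))"
      have n1: "norm ((\<chi> j. 1) :: real ^ 'n::{finite,linorder}) > 0"
      proof -
        have "((\<chi> j. 1) :: real ^ 'n::{finite,linorder}) \<noteq> 0" by (metis vec_lambda_beta zero_index zero_neq_one)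
        then show ?thesis by simp
      qed
      have tpos: "t > 0" using e n1 by (simp add: t_def)
      have "dist x (x + t *\<^sub>R (\<chi> j. 1)) = t * norm ((\<chi> j. 1) :: real ^ 'n::{finite,linorder})"
        using tpos by (simp add: dist_norm)
      also have "\<dots> = e / 2" using n1 by (simp add: t_def)
      finally have "x + t *\<^sub>R (\<chi> j. 1) \<in> ball x e" using e by simp
      then have "x + t *\<^sub>R (\<chi> j. 1) \<in> Qset c" using e by blast
      then have "av \<bullet> (x + t *\<^sub>R (\<chi> j. 1)) \<le> 1" by (rule Qle)
      moreover have "av \<bullet> (x + t *\<^sub>R (\<chi> j. 1)) = 1 + t * sum a UNIV"
        using ax by (simp add: inner_add_right inner_vec_def av_def distrib_left sum.distrib sum_distrib_left mult.commute)
      ultimately show False using suma cpos tpos by (simp add: divide_le_0_iff)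
    qed
    moreover have "x \<in> closure (Qset c)" using x closure_subset by blast
    ultimately show "x \<in> frontier (Qset c)" by (simp add: frontier_def)
  qed
  have part2: "infdist 0 (affine hull (range (wpt lam))) \<ge> c"
  proof -
    have ne: "affine hull (range (wpt lam)) \<noteq> {}" by simp
    have "c \<le> dist 0 x" if "x \<in> affine hull (range (wpt lam))" for x :: "real ^ 'n::{finite,linorder}"
    proof -
      have "1 = av \<bullet> x" using that Hsub by auto
      also have "\<dots> = (\<Sum>j\<in>UNIV. a j * x $ j)" by (simp add: inner_vec_def av_def)
      also have "\<dots> \<le> (\<Sum>j\<in>UNIV. a j * norm x)"
      proof (rule sum_mono)
        fix j :: 'n
        have "x $ j \<le> norm x" using component_le_norm_cart[of x j] by simp
        then show "a j * x $ j \<le> a j * norm x" using anonneg[of j] by (simp add: mult_left_mono)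
      qed
      also have "\<dots> = norm x / c" using suma by (simp add: sum_distrib_right[symmetric])
      finally have "c \<le> norm x" using cpos by (simp add: field_simps)
      then show ?thesis by simp
    qed
    then show ?thesis using ne by (simp add: infdist_notempty cINF_greatest)
  qed
  show ?thesis using part1 part2 unfolding c_def by simp
qed

end
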